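(* In the setting described in the context, suppose $p_i,p_j,p_k,p_l\in S_1$ satisfy $d(p_i,p_k)\ne d(p_j,p_l)$. If $C_2$ is a line, then $|C_{ij}\cap C_{kl}|\le4$.
   Context: A plane algebraic curve is an infinite set $Z_{\mathbb{R}}(f)=\{(a,b)\in\mathbb{R}^2:f(a,b)=0\}$ for a nonzero $f\in\mathbb{R}[x,y]$; its degree is the minimal degree of such $f$; it is irreducible if $f$ can be chosen irreducible over $\mathbb{R}$. Setting: $d\ge1$; $C_1=Z_{\mathbb{R}}(f_1)$ and $C_2=Z_{\mathbb{R}}(f_2)$ are irreducible plane algebraic curves of degree at most $d$ (possibly equal), with $f_1,f_2$ of minimum degree. $S_1=\{p_1,\dots,p_m\}\subset C_1$ and $S_2=\{q_1,\dots,q_n\}\subset C_2$ are sets of distinct points, $p_i=(a_i,b_i)$, satisfying: (1) neither $C_1$ nor $C_2$ is a vertical line; (2) $S_1\cap S_2=\emptyset$; (3) if $C_1$ (resp. $C_2$) is a circle, its center is not in $S_2$ (resp. $S_1$); (4) if $C_1$ (resp. $C_2$) is a circle, every concentric circle contains at most one point of $S_2$ (resp. $S_1$); (5) if $C_1$ (resp. $C_2$) is a line, then for every line $\ell$ parallel to it, the union of $\ell$ and its reflection in $C_1$ (resp. $C_2$) contains at most one point of $S_2$ (resp. $S_1$); (6) if $C_1$ (resp. $C_2$) is a line, every orthogonal line contains at most one point of $S_2$ (resp. $S_1$). For $1\le i,j\le m$, $C_{ij}\subset\mathbb{R}^4$ is the set of $(x,y,x',y')$ with $f_2(x,y)=0$,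 $f_2(x',y')=0$ and $(x-a_i)^2+(y-b_i)^2=(x'-a_j)^2+(y'-b_j)^2$. $d(\cdot,\cdot)$ is Euclidean distance. *)

theory Defs
  imports "HOL-Analysis.Analysis" "HOL-Computational_Algebra.Polynomial"
begin

(* Bivariate real polynomials f(x,y) are represented as  real poly poly :
   the outer variable is y, the coefficients are polynomials in x. *)
definition eval2 :: "real poly poly \<Rightarrow> real \<Rightarrow> real \<Rightarrow> real" where
  "eval2 f x y = poly (poly f [:y:]) x"

definition tdeg :: "real poly poly \<Rightarrow> nat" where
  "tdeg f = (if f = 0 then 0 else Max {i + degree (coeff f i) | i. coeff f i \<noteq> 0})"

definition zero_set :: "real poly poly \<Rightarrow> (real \<times> real) set" where
  "zero_set f = {(a, b). eval2 f a b = 0}"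

definition plane_curve :: "(real \<times> real) set \<Rightarrow> bool" where
  "plane_curve C \<longleftrightarrow> infinite C \<and> (\<exists>f. f \<noteq> 0 \<and> C = zero_set f)"

definition curve_deg :: "(real \<times> real) set \<Rightarrow> nat" where
  "curve_deg C = (LEAST k. \<exists>f. f \<noteq> 0 \<and> zero_set f = C \<and> tdeg f = k)"

definition irreducible_curve :: "(real \<times> real) set \<Rightarrow> bool" where
  "irreducible_curve C \<longleftrightarrow> plane_curve C \<and> (\<exists>f. irreducible f \<and> C = zero_set f)"

definition min_deg_poly :: "real poly poly \<Rightarrow> (real \<times> real) set \<Rightarrow> bool" where
  "min_deg_poly f C \<longleftrightarrow> f \<noteq> 0 \<and> zero_set f = C \<and> tdeg f = curve_deg C"

definition line_set :: "real \<Rightarrow> real \<Rightarrow> real \<Rightarrow> (real \<times> real) set" where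
  "line_set a b c = {(x, y). a * x + b * y + c = 0}"

definition is_line :: "(real \<times> real) set \<Rightarrow> bool" where
  "is_line C \<longleftrightarrow> (\<exists>a b c. (a, b) \<noteq> (0, 0) \<and> C = line_set a b c)"

definition is_vertical_line :: "(real \<times> real) set \<Rightarrow> bool" where
  "is_vertical_line C \<longleftrightarrow> (\<exists>a c. a \<noteq> 0 \<and> C = line_set a 0 c)"

definition is_circle :: "(real \<times> real) set \<Rightarrow> bool" where
  "is_circle C \<longleftrightarrow> (\<exists>z r. r > 0 \<and> C = sphere z r)"

definition reflect_line :: "real \<Rightarrow> real \<Rightarrow> real \<Rightarrow> real \<times> real \<Rightarrow> real \<times> real" where
  "reflect_line a b c p =
     (let t = 2 * (a * fst p + b * snd p + c) / (a\<^sup>2 + b\<^sup>2) in (fst p - t * a, snd p - t * b))"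

definition at_most_one_in :: "(real \<times> real) set \<Rightarrow> (real \<times> real) set \<Rightarrow> bool" where
  "at_most_one_in A S \<longleftrightarrow> (\<forall>u \<in> S \<inter> A. \<forall>v \<in> S \<inter> A. u = v)"

definition circle_conds :: "(real \<times> real) set \<Rightarrow> (real \<times> real) set \<Rightarrow> bool" where
  "circle_conds C S \<longleftrightarrow> (\<forall>z r. r > 0 \<and> C = sphere z r \<longrightarrow>
      z \<notin> S \<and> (\<forall>r'. r' > 0 \<longrightarrow> at_most_one_in (sphere z r') S))"

definition line_conds :: "(real \<times> real) set \<Rightarrow> (real \<times> real) set \<Rightarrow> bool" where
  "line_conds C S \<longleftrightarrow> (\<forall>a b c. (a, b) \<noteq> (0, 0) \<and> C = line_set a b c \<longrightarrow>
      (\<forall>c'. at_most_one_in (line_set a b c' \<union> reflect_line a b c ` line_set a b c') S) \<and>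
      (\<forall>c'. at_most_one_in (line_set b (- a) c') S))"

definition Cset :: "real poly poly \<Rightarrow> real \<times> real \<Rightarrow> real \<times> real
                    \<Rightarrow> (real \<times> real \<times> real \<times> real) set" where
  "Cset f2 u v = {(x, y, x', y'). eval2 f2 x y = 0 \<and> eval2 f2 x' y' = 0 \<and>
      (x - fst u)\<^sup>2 + (y - snd u)\<^sup>2 = (x' - fst v)\<^sup>2 + (y' - snd v)\<^sup>2}"

end

theory Submission
  imports Defs
begin

definition AA :: "real \<Rightarrow> real \<Rightarrow> real \<Rightarrow> real\<times>real \<Rightarrow> real" where
  "AA a b c p = b\<^sup>2 * fst p - a * (c + b * snd p)"
definition KK :: "real \<Rightarrow> real \<Rightarrow> real \<Rightarrow> real\<times>real \<Rightarrow> real" where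
  "KK a b c p = b\<^sup>2 * (fst p)\<^sup>2 + (c + b * snd p)\<^sup>2"
definition ff :: "real \<Rightarrow> real \<Rightarrow> real \<Rightarrow> real\<times>real \<Rightarrow> real \<Rightarrow> real" where
  "ff a b c p x = (a\<^sup>2+b\<^sup>2) * x\<^sup>2 - 2 * AA a b c p * x + KK a b c p"

lemma ff_eq:
  assumes "b \<noteq> 0" "a*x + b*y + c = 0"
  shows "b\<^sup>2 * ((x - fst p)\<^sup>2 + (y - snd p)\<^sup>2) = ff a b c p x"
proof -
  have "b * (y - snd p) = - (a*x + c + b * snd p)" using assms(2) by (simp add: algebra_simps)
  hence "b\<^sup>2 * (y - snd p)\<^sup>2 = (a*x + c + b * snd p)\<^sup>2"
    by (metis power_mult_distrib power2_minus)
  thus ?thesis unfolding ff_def AA_def KK_def by (simp add: algebra_simps power2_eq_square)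
qed

lemma disc_eq: "(a\<^sup>2+b\<^sup>2) * KK a b c p - (AA a b c p)\<^sup>2 = b\<^sup>2 * (a * fst p + b * snd p + c)\<^sup>2"
  unfolding AA_def KK_def by (simp add: algebra_simps power2_eq_square)

lemma L:
  assumes "\<forall>x. ff a b c p x = ff a b c q (lam*x+mu)" "lam\<^sup>2 = 1"
  shows "(a\<^sup>2+b\<^sup>2) * KK a b c p - (AA a b c p)\<^sup>2 = (a\<^sup>2+b\<^sup>2) * KK a b c q - (AA a b c q)\<^sup>2"
proof -
  define N where "N = a\<^sup>2+b\<^sup>2"
  define Ap where "Ap = AA a b c p"
  define Aq where "Aq = AA a b c q"
  define Kp where "Kp = KK a b c p"
  define Kq where "Kq = KK a b c q"
  have f: "\<And>x. N * x\<^sup>2 - 2*Ap*x + Kp = N*(lam*x+mu)\<^sup>2 - 2*Aq*(lam*x+mu) + Kq"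
    using assms(1) unfolding ff_def N_def Ap_def Aq_def Kp_def Kq_def by auto
  have e0: "Kp = N*mu\<^sup>2 - 2*Aq*mu + Kq" using f[of 0] by simp
  have e1: "N - 2*Ap + Kp = N*(lam+mu)\<^sup>2 - 2*Aq*(lam+mu) + Kq" using f[of 1] by simp
  have e2: "N + 2*Ap + Kp = N*(mu-lam)\<^sup>2 - 2*Aq*(mu-lam) + Kq" using f[of "-1"] by simp
  have "4*Ap = 4*(lam*(Aq - N*mu))" using e1 e2 by (simp add: algebra_simps power2_eq_square)
  hence ap: "Ap = lam*(Aq - N*mu)" by simp
  have "Ap\<^sup>2 = (Aq - N*mu)\<^sup>2" unfolding ap using assms(2) by (simp add: power_mult_distrib)
  hence "N*Kp - Ap\<^sup>2 = N*Kq - Aq\<^sup>2"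
    unfolding e0 by (simp add: algebra_simps power2_eq_square)
  thus ?thesis unfolding N_def Ap_def Aq_def Kp_def Kq_def .
qed

definition TT :: "real \<Rightarrow> real \<Rightarrow> real \<Rightarrow> real\<times>real \<Rightarrow> real\<times>real \<Rightarrow> real\<times>real \<Rightarrow> real\<times>real \<Rightarrow> (real\<times>real\<times>real\<times>real) set" where
  "TT a b c u v w z = {(x,y,x',y'). a*x+b*y+c = 0 \<and> a*x'+b*y'+c = 0 \<and>
     (x - fst u)\<^sup>2 + (y - snd u)\<^sup>2 = (x' - fst v)\<^sup>2 + (y' - snd v)\<^sup>2 \<and>
     (x - fst w)\<^sup>2 + (y - snd w)\<^sup>2 = (x' - fst z)\<^sup>2 + (y' - snd z)\<^sup>2}"

lemma aux_lin: "((-2)*r*x = (-2)*d*y + k) = (2*d*y = 2*r*x + (k::real))" by linarith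

lemma aux2: "(-2)*r*x + k1 = (-2)*d*y + k2 \<Longrightarrow> 2*d*y = 2*r*x + (k2 - (k1::real))" by linarith

lemma ffdiff: "ff a b c p x - ff a b c q x = -2*(AA a b c p - AA a b c q)*x + (KK a b c p - KK a b c q)"
  unfolding ff_def by (simp add: algebra_simps)

lemma core:
  fixes a b c :: real and u v w z :: "real \<times> real" and P :: "(real\<times>real) set"
  assumes b: "b \<noteq> 0"
    and refl: "\<And>p q. p \<in> P \<Longrightarrow> q \<in> P \<Longrightarrow> (a* fst p + b* snd p + c)\<^sup>2 = (a* fst q + b* snd q + c)\<^sup>2 \<Longrightarrow> p = q"
    and P: "u \<in> P" "v \<in> P" "w \<in> P" "z \<in> P"
    and d: "dist u w \<noteq> dist v z"
    and A: "AA a b c v \<noteq> AA a b c z"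
  shows "finite (TT a b c u v w z) \<and> card (TT a b c u v w z) \<le> 2"
proof -
  define N where "N = a\<^sup>2+b\<^sup>2"
  have N: "N > 0" using b unfolding N_def by (simp add: add_nonneg_pos)
  define D2 where "D2 = AA a b c v - AA a b c z"
  have D2: "D2 \<noteq> 0" using A unfolding D2_def by simp
  define lam where "lam = (AA a b c u - AA a b c w) / D2"
  define mu where "mu = ((KK a b c v - KK a b c z) - (KK a b c u - KK a b c w)) / (2*D2)"
  have l: "lam * D2 = AA a b c u - AA a b c w" unfolding lam_def using D2 by simp
  have m: "2*mu*D2 = (KK a b c v - KK a b c z) - (KK a b c u - KK a b c w)" unfolding mu_def using D2 by simp
  have lin: "ff a b c u x - ff a b c w x = ff a b c v (lam*x+mu) - ff a b c z (lam*x+mu)" for x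
  proof -
    have a1: "ff a b c u x - ff a b c w x = -2*(AA a b c u - AA a b c w)*x + (KK a b c u - KK a b c w)"
      unfolding ff_def by (simp add: algebra_simps)
    have a2: "ff a b c v y - ff a b c z y = -2*D2*y + (KK a b c v - KK a b c z)" for y
      unfolding ff_def D2_def by (simp add: algebra_simps)
    have "ff a b c u x - ff a b c w x = -2*(lam * D2)*x + (KK a b c v - KK a b c z) - 2*mu*D2"
      unfolding a1 l m by simp
    also have "\<dots> = ff a b c v (lam*x+mu) - ff a b c z (lam*x+mu)" unfolding a2 by (simp add: algebra_simps)
    finally show ?thesis .
  qed
  define g where "g x = ff a b c u x - ff a b c v (lam*x+mu)" for x
  define c2 where "c2 = N*(1-lam\<^sup>2)"
  define c1 where "c1 = -2*(AA a b c u) - 2*N*lam*mu + 2*(AA a b c v)*lam"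
  define c0 where "c0 = KK a b c u - N*mu\<^sup>2 + 2*(AA a b c v)*mu - KK a b c v"
  define Q where "Q = [:c0, c1, c2:]"
  have gQ: "g x = poly Q x" for x
    unfolding g_def Q_def c0_def c1_def c2_def ff_def N_def
    by (simp add: algebra_simps power2_eq_square)
  define h where "h x = (x, -(a*x+c)/b, lam*x+mu, -(a*(lam*x+mu)+c)/b)" for x
  have sub: "TT a b c u v w z \<subseteq> h ` {x. poly Q x = 0}"
  proof
    fix t assume "t \<in> TT a b c u v w z"
    then obtain x y x' y' where t: "t = (x,y,x',y')" and l1: "a*x+b*y+c = 0" and l2: "a*x'+b*y'+c = 0"
      and e1: "(x - fst u)\<^sup>2 + (y - snd u)\<^sup>2 = (x' - fst v)\<^sup>2 + (y' - snd v)\<^sup>2"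
      and e2: "(x - fst w)\<^sup>2 + (y - snd w)\<^sup>2 = (x' - fst z)\<^sup>2 + (y' - snd z)\<^sup>2"
      unfolding TT_def by auto
    have f1: "ff a b c u x = ff a b c v x'" using e1 ff_eq[OF b l1, of u] ff_eq[OF b l2, of v] by simp
    have f2: "ff a b c w x = ff a b c z x'" using e2 ff_eq[OF b l1, of w] ff_eq[OF b l2, of z] by simp
    have "ff a b c u x - ff a b c w x = ff a b c v x' - ff a b c z x'" using f1 f2 by simp
    hence "-2*(AA a b c u - AA a b c w)*x + (KK a b c u - KK a b c w) = -2*D2 * x'  + (KK a b c v - KK a b c z)"
      unfolding ffdiff D2_def .
    hence "2*D2*x' = 2*(AA a b c u - AA a b c w)*x + ((KK a b c v - KK a b c z) - (KK a b c u - KK a b c w))"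
      by (rule aux2)
    hence "2*D2*x' = 2*(lam*D2)*x + 2*mu*D2" unfolding l m .
    hence "D2*x' = D2*(lam*x+mu)" by (simp add: algebra_simps)
    hence x': "x' = lam*x+mu" using D2 by simp
    have y: "y = -(a*x+c)/b" using l1 b by (simp add: field_simps)
    have y': "y' = -(a*x'+c)/b" using l2 b by (simp add: field_simps)
    have "poly Q x = 0" using f1 unfolding gQ[symmetric] g_def x' by simp
    moreover have "t = h x" unfolding t h_def using y y' x' by simp
    ultimately show "t \<in> h ` {x. poly Q x = 0}" by blast
  qed
  have Q0: "Q \<noteq> 0"
  proof
    assume Q: "Q = 0"
    hence "c2 = 0" unfolding Q_def by simp
    hence lam2: "lam\<^sup>2 = 1" unfolding c2_def using N by simp
    have g0: "\<forall>x. ff a b c u x = ff a b c v (lam*x+mu)" using gQ Q unfolding g_def by simp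
    have g1: "\<forall>x. ff a b c w x = ff a b c z (lam*x+mu)"
    proof
      fix x
      have "ff a b c u x = ff a b c v (lam*x+mu)" using g0 by blast
      with lin[of x] show "ff a b c w x = ff a b c z (lam*x+mu)" by linarith
    qed
    have "b\<^sup>2 * (a * fst u + b * snd u + c)\<^sup>2 = b\<^sup>2 * (a * fst v + b * snd v + c)\<^sup>2"
      using L[OF g0 lam2] unfolding disc_eq .
    hence "u = v" using refl P b by simp
    have "b\<^sup>2 * (a * fst w + b * snd w + c)\<^sup>2 = b\<^sup>2 * (a * fst z + b * snd z + c)\<^sup>2"
      using L[OF g1 lam2] unfolding disc_eq .
    hence "w = z" using refl P b by simp
    show False using d \<open>u = v\<close> \<open>w = z\<close> by simp
  qed
  have "degree Q \<le> 2" unfolding Q_def by simp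
  have fin: "finite (h ` {x. poly Q x = 0})" using poly_roots_finite[OF Q0] by simp
  have "card (TT a b c u v w z) \<le> card (h ` {x. poly Q x = 0})" using card_mono[OF fin sub] .
  also have "\<dots> \<le> card {x. poly Q x = 0}" by (rule card_image_le) (rule poly_roots_finite[OF Q0])
  also have "\<dots> \<le> degree Q" by (rule card_poly_roots_bound[OF Q0])
  finally show ?thesis using \<open>degree Q \<le> 2\<close> finite_subset[OF sub fin] by simp
qed

lemma refl_e:
  fixes a b c :: real
  assumes "(a,b) \<noteq> (0,0)"
  shows "a * fst (reflect_line a b c q) + b * snd (reflect_line a b c q) + c = - (a * fst q + b * snd q + c)"
proof -
  have N: "a\<^sup>2 + b\<^sup>2 \<noteq> 0" using assms by (simp add: add_nonneg_eq_0_iff)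
  define e where "e = a * fst q + b * snd q + c"
  define T where "T = 2 * e / (a\<^sup>2 + b\<^sup>2)"
  have r: "reflect_line a b c q = (fst q - T * a, snd q - T * b)"
    unfolding reflect_line_def Let_def T_def e_def by simp
  have TN: "T * (a\<^sup>2 + b\<^sup>2) = 2 * e" unfolding T_def using N by simp
  have "a * (fst q - T * a) + b * (snd q - T * b) + c = e - T * (a\<^sup>2 + b\<^sup>2)"
    unfolding e_def by (simp add: algebra_simps power2_eq_square)
  also have "\<dots> = - e" unfolding TN by simp
  finally show ?thesis unfolding r e_def by simp
qed

lemma refl_inv:
  fixes a b c :: real
  assumes "(a,b) \<noteq> (0,0)"
  shows "reflect_line a b c (reflect_line a b c q) = q"
proof -
  define r where "r = reflect_line a b c q"
  define e where "e = a * fst q + b * snd q + c"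
  define T where "T = 2 * e / (a\<^sup>2 + b\<^sup>2)"
  have er: "a * fst r + b * snd r + c = - e" unfolding r_def e_def by (rule refl_e[OF assms])
  have r: "r = (fst q - T * a, snd q - T * b)"
    unfolding r_def reflect_line_def Let_def T_def e_def by simp
  have "reflect_line a b c r = (fst r - 2 * (a * fst r + b * snd r + c) / (a\<^sup>2 + b\<^sup>2) * a, snd r - 2 * (a * fst r + b * snd r + c) / (a\<^sup>2 + b\<^sup>2) * b)"
    unfolding reflect_line_def Let_def by simp
  also have "\<dots> = (fst r + T * a, snd r + T * b)" unfolding er T_def by simp
  also have "\<dots> = q" unfolding r by simp
  finally show ?thesis unfolding r_def .
qed

lemma TT_swap: "TT a b c u v w z = (\<lambda>(x,y,x',y'). (x',y',x,y)) ` TT a b c v u z w"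
  unfolding TT_def by (auto simp: image_iff)

theorem lemma4p4:
  fixes d m n :: nat
    and C1 C2 :: "(real \<times> real) set"
    and f1 f2 :: "real poly poly"
    and p q :: "nat \<Rightarrow> real \<times> real"
    and i j k l :: nat
  assumes "d \<ge> 1"
    and "irreducible_curve C1" "irreducible_curve C2"
    and "curve_deg C1 \<le> d" "curve_deg C2 \<le> d"
    and "min_deg_poly f1 C1" "min_deg_poly f2 C2"
    and "inj_on p {1..m}" "inj_on q {1..n}"
    and "p ` {1..m} \<subseteq> C1" "q ` {1..n} \<subseteq> C2"
    and "\<not> is_vertical_line C1" "\<not> is_vertical_line C2"
    and "p ` {1..m} \<inter> q ` {1..n} = {}"
    and "circle_conds C1 (q ` {1..n})" "circle_conds C2 (p ` {1..m})"
    and "line_conds C1 (q ` {1..n})" "line_conds C2 (p ` {1..m})"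
    and "i \<in> {1..m}" "j \<in> {1..m}" "k \<in> {1..m}" "l \<in> {1..m}"
    and "dist (p i) (p k) \<noteq> dist (p j) (p l)"
    and "is_line C2"
  shows "finite (Cset f2 (p i) (p j) \<inter> Cset f2 (p k) (p l)) \<and>
         card (Cset f2 (p i) (p j) \<inter> Cset f2 (p k) (p l)) \<le> 4"
proof -
  define P where "P = p ` {1..m}"
  obtain a b c where ab: "(a,b) \<noteq> (0,0)" and C2: "C2 = line_set a b c"
    using assms(24) unfolding is_line_def by blast
  have b: "b \<noteq> 0"
  proof
    assume "b = 0"
    hence "a \<noteq> 0" using ab by simp
    hence "is_vertical_line C2" unfolding is_vertical_line_def C2 using \<open>b = 0\<close> by blast
    thus False using assms(13) by simp
  qed
  have zs: "zero_set f2 = C2" using assms(7) unfolding min_deg_poly_def by simp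
  have ev: "eval2 f2 x y = 0 \<longleftrightarrow> a*x+b*y+c = 0" for x y
  proof -
    have "eval2 f2 x y = 0 \<longleftrightarrow> (x,y) \<in> zero_set f2" unfolding zero_set_def by simp
    also have "\<dots> \<longleftrightarrow> a*x+b*y+c = 0" unfolding zs C2 line_set_def by simp
    finally show ?thesis .
  qed
  have CT: "Cset f2 u v \<inter> Cset f2 w z = TT a b c u v w z" for u v w z
    unfolding Cset_def TT_def ev by auto
  have lc: "(\<forall>c'. at_most_one_in (line_set a b c' \<union> reflect_line a b c ` line_set a b c') P) \<and>
      (\<forall>c'. at_most_one_in (line_set b (- a) c') P)"
    using assms(18) ab C2 unfolding line_conds_def P_def by blast
  have orth: "p1 = p2" if "p1 \<in> P" "p2 \<in> P" "b * fst p1 - a * snd p1 = b * fst p2 - a * snd p2" for p1 p2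
  proof -
    define c' where "c' = -(b * fst p1 - a * snd p1)"
    have "p1 \<in> line_set b (- a) c'" "p2 \<in> line_set b (- a) c'"
      unfolding line_set_def c'_def using that(3) by (auto simp: case_prod_beta)
    thus ?thesis using lc that(1,2) unfolding at_most_one_in_def by blast
  qed
  have refl: "p1 = p2" if "p1 \<in> P" "p2 \<in> P"
    "(a * fst p1 + b * snd p1 + c)\<^sup>2 = (a * fst p2 + b * snd p2 + c)\<^sup>2" for p1 p2
  proof -
    define c' where "c' = c - (a * fst p1 + b * snd p1 + c)"
    have L: "line_set a b c' \<union> reflect_line a b c ` line_set a b c' = line_set a b c' \<union> reflect_line a b c ` line_set a b c'" by simp
    have 1: "p1 \<in> line_set a b c'" unfolding line_set_def c'_def by (auto simp: case_prod_beta)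
    have "a * fst p2 + b * snd p2 + c = a * fst p1 + b * snd p1 + c \<or>
          a * fst p2 + b * snd p2 + c = - (a * fst p1 + b * snd p1 + c)"
      using that(3) by (metis power2_eq_iff)
    hence 2: "p2 \<in> line_set a b c' \<union> reflect_line a b c ` line_set a b c'"
    proof
      assume "a * fst p2 + b * snd p2 + c = a * fst p1 + b * snd p1 + c"
      hence "p2 \<in> line_set a b c'" unfolding line_set_def c'_def by (auto simp: case_prod_beta)
      thus ?thesis by blast
    next
      assume h: "a * fst p2 + b * snd p2 + c = - (a * fst p1 + b * snd p1 + c)"
      have "reflect_line a b c p2 \<in> line_set a b c'"
        using refl_e[OF ab, of c p2] h unfolding line_set_def c'_def by (auto simp: case_prod_beta)
      hence "reflect_line a b c (reflect_line a b c p2) \<in> reflect_line a b c ` line_set a b c'" by blast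
      thus ?thesis unfolding refl_inv[OF ab] by blast
    qed
    show ?thesis using lc 1 2 that(1,2) unfolding at_most_one_in_def by blast
  qed
  have AAinj: "p1 = p2" if "p1 \<in> P" "p2 \<in> P" "AA a b c p1 = AA a b c p2" for p1 p2
  proof -
    have "b * (b * fst p1 - a * snd p1) = b * (b * fst p2 - a * snd p2)"
      using that(3) unfolding AA_def by (simp add: algebra_simps power2_eq_square)
    hence "b * fst p1 - a * snd p1 = b * fst p2 - a * snd p2" using b by simp
    thus ?thesis using orth that(1,2) by blast
  qed
  have Pin: "p i \<in> P" "p j \<in> P" "p k \<in> P" "p l \<in> P" using assms(19-22) unfolding P_def by auto
  have "finite (TT a b c (p i) (p j) (p k) (p l)) \<and> card (TT a b c (p i) (p j) (p k) (p l)) \<le> 2"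
  proof (cases "AA a b c (p j) = AA a b c (p l)")
    case False
    show ?thesis by (rule core[OF b refl Pin assms(23) False]) auto
  next
    case True
    hence jl: "p j = p l" using AAinj Pin by blast
    have ik: "AA a b c (p i) \<noteq> AA a b c (p k)"
    proof
      assume "AA a b c (p i) = AA a b c (p k)"
      hence "p i = p k" using AAinj Pin by blast
      thus False using jl assms(23) by simp
    qed
    have d': "dist (p j) (p l) \<noteq> dist (p i) (p k)" using assms(23) by simp
    have cr: "finite (TT a b c (p j) (p i) (p l) (p k)) \<and> card (TT a b c (p j) (p i) (p l) (p k)) \<le> 2"
      by (rule core[OF b refl Pin(2,1,4,3) d' ik]) auto
    define sw where "sw = (\<lambda>(x::real,y::real,x'::real,y'::real). (x',y',x,y))"
    have e: "TT a b c (p i) (p j) (p k) (p l) = sw ` TT a b c (p j) (p i) (p l) (p k)"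
      unfolding sw_def by (rule TT_swap)
    have "card (sw ` TT a b c (p j) (p i) (p l) (p k)) \<le> card (TT a b c (p j) (p i) (p l) (p k))"
      using cr card_image_le by blast
    thus ?thesis unfolding e using cr by simp
  qed
  thus ?thesis unfolding CT by simp
qed

end
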